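(* Let $\sigma=(a_1,\ldots,a_s)$ be an $r$-good partition of $r$ and let $H=H(n,r,q\mid\sigma)$. Let $A,B$ be disjoint sets with $A\cup B=\{1,\ldots,s\}$ such that, with $a=\sum_{j\in A}a_j$ and $b=\sum_{j\in B}a_j$, one has $\gcd(a,b)=\gcd(a,r)=\gcd(b,r)=1$, and let $L=\mathrm{lcm}(a,b)$. If $r\mid n$ and $L\mid q$, then $H$ has a perfect matching, that is, $\nu(H)=\frac{nq}{r}$.
   Context: A $\sigma$-hypergraph $H=H(n,r,q\mid\sigma)$, for a partition $\sigma$ of $r$, is the $r$-uniform hypergraph whose vertex set is the disjoint union of $n$ classes $V_1,\ldots,V_n$, each of size $q$; an $r$-subset $K$ of vertices is an edge iff the multiset of non-zero values $|K\cap V_i|$ equals $\sigma$. The partition $\sigma$ is $r$-good if there is a subsequence $\pi$ of $(a_1,\ldots,a_s)$ (a selection of some of the parts, by index) such that $\sum_{a_j\in\pi}a_j$ is coprime to $r$. A perfect matching is a set of pairwise vertex-disjoint edges covering every vertex; $\nu(H)$ is the maximum size of a matching. *)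

theory Defs
  imports Main "HOL-Library.Multiset"
begin

text \<open>Vertices are pairs (i,k) with i < n (class index)
  and k < q (position inside the class); the class V_i is {i} \<times> {..<q}.\<close>

definition is_partition :: "nat list \<Rightarrow> nat \<Rightarrow> bool" where
  "is_partition \<sigma> r \<longleftrightarrow> (\<forall>x\<in>set \<sigma>. 0 < x) \<and> sum_list \<sigma> = r"

definition r_good :: "nat list \<Rightarrow> nat \<Rightarrow> bool" where
  "r_good \<sigma> r \<longleftrightarrow> (\<exists>J \<subseteq> {..<length \<sigma>}. coprime (\<Sum>j\<in>J. \<sigma> ! j) r)"

definition sh_vertices :: "nat \<Rightarrow> nat \<Rightarrow> (nat \<times> nat) set" where
  "sh_vertices n q = {..<n} \<times> {..<q}"

definition sh_class :: "nat \<Rightarrow> nat \<Rightarrow> (nat \<times> nat) set" where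
  "sh_class q i = {i} \<times> {..<q}"

definition sh_edges :: "nat \<Rightarrow> nat \<Rightarrow> nat \<Rightarrow> nat list \<Rightarrow> (nat \<times> nat) set set" where
  "sh_edges n r q \<sigma> = {K. K \<subseteq> sh_vertices n q \<and> card K = r \<and>
     {# card (K \<inter> sh_class q i). i \<in># {# i \<in># mset_set {..<n}. card (K \<inter> sh_class q i) \<noteq> 0 #} #}
       = mset \<sigma>}"

definition is_matching :: "nat \<Rightarrow> nat \<Rightarrow> nat \<Rightarrow> nat list \<Rightarrow> (nat \<times> nat) set set \<Rightarrow> bool" where
  "is_matching n r q \<sigma> M \<longleftrightarrow> M \<subseteq> sh_edges n r q \<sigma> \<and>
     (\<forall>e\<in>M. \<forall>f\<in>M. e \<noteq> f \<longrightarrow> e \<inter> f = {})"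

definition is_perfect_matching :: "nat \<Rightarrow> nat \<Rightarrow> nat \<Rightarrow> nat list \<Rightarrow> (nat \<times> nat) set set \<Rightarrow> bool" where
  "is_perfect_matching n r q \<sigma> M \<longleftrightarrow> is_matching n r q \<sigma> M \<and> \<Union>M = sh_vertices n q"

text \<open>Matching number nu(H): maximum size of a matching (all matchings are finite
  subsets of the finite edge set).\<close>
definition sh_nu :: "nat \<Rightarrow> nat \<Rightarrow> nat \<Rightarrow> nat list \<Rightarrow> nat" where
  "sh_nu n r q \<sigma> = Max (card ` {M. is_matching n r q \<sigma> M})"

end

theory Submission imports Defs "HOL-Number_Theory.Cong" begin

definition PP :: "nat list \<Rightarrow> (nat \<times> nat) set" where
  "PP \<sigma> = Sigma {..<length \<sigma>} (\<lambda>j. {..<\<sigma>!j})"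

lemma PP_finite: "finite (PP \<sigma>)" unfolding PP_def by auto

lemma PP_card: "card (PP \<sigma>) = sum_list \<sigma>"
  unfolding PP_def by (simp add: card_SigmaI sum_list_sum_nth atLeast0LessThan)

lemma mset_nth: "mset \<sigma> = image_mset (\<lambda>j. \<sigma>!j) (mset_set {..<length \<sigma>})"
proof -
  have "\<sigma> = map (\<lambda>j. \<sigma>!j) [0..<length \<sigma>]" by (simp add: map_nth)
  then have "mset \<sigma> = mset (map (\<lambda>j. \<sigma>!j) [0..<length \<sigma>])" by simp
  also have "\<dots> = image_mset (\<lambda>j. \<sigma>!j) (mset_set {..<length \<sigma>})"
    by (simp add: atLeast0LessThan)
  finally show ?thesis .
qed

lemma edge_lemma:
  assumes pos: "\<forall>x\<in>set \<sigma>. 0 < x"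
    and inj: "inj_on \<phi> (PP \<sigma>)"
    and sub: "\<phi> ` PP \<sigma> \<subseteq> sh_vertices n q"
    and cls: "\<And>j t. (j,t) \<in> PP \<sigma> \<Longrightarrow> fst (\<phi> (j,t)) = c j"
    and cinj: "inj_on c {..<length \<sigma>}"
  shows "\<phi> ` PP \<sigma> \<in> sh_edges n (sum_list \<sigma>) q \<sigma>"
proof -
  let ?K = "\<phi> ` PP \<sigma>"
  let ?s = "length \<sigma>"
  have cardK: "card ?K = sum_list \<sigma>" using inj PP_card card_image by metis
  have posj: "\<And>j. j < ?s \<Longrightarrow> 0 < \<sigma>!j" using pos by auto
  have cn: "\<And>j. j < ?s \<Longrightarrow> c j < n"
  proof -
    fix j assume j: "j < ?s"
    then have "(j,0) \<in> PP \<sigma>" using posj unfolding PP_def by auto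
    then show "c j < n" using sub cls[of j 0] unfolding sh_vertices_def by force
  qed
  have inter: "?K \<inter> sh_class q i = \<phi> ` {p\<in>PP \<sigma>. c (fst p) = i}" for i
  proof -
    have "\<And>p. p \<in> PP \<sigma> \<Longrightarrow> (\<phi> p \<in> sh_class q i) = (c (fst p) = i)"
      using sub cls unfolding sh_class_def sh_vertices_def by fastforce
    then show ?thesis by blast
  qed
  have cardi: "card (?K \<inter> sh_class q i) = (if \<exists>j<?s. c j = i then \<sigma>!(SOME j. j < ?s \<and> c j = i) else 0)" for i
  proof (cases "\<exists>j<?s. c j = i")
    case True
    then obtain j where j: "j < ?s" "c j = i" by auto
    have sj: "(SOME j. j < ?s \<and> c j = i) = j"
      using j cinj by (metis (mono_tags, lifting) inj_onD lessThan_iff someI_ex)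
    have "{p\<in>PP \<sigma>. c (fst p) = i} = {j} \<times> {..<\<sigma>!j}"
      using j cinj unfolding PP_def by (auto dest: inj_onD)
    then have "card (?K \<inter> sh_class q i) = card ({j} \<times> {..<\<sigma>!j})"
      using inter inj by (metis (no_types, lifting) card_image inj_on_subset mem_Collect_eq subsetI)
    then show ?thesis using True sj by simp
  next
    case False
    then have "{p\<in>PP \<sigma>. c (fst p) = i} = {}" unfolding PP_def by auto
    then have "?K \<inter> sh_class q i = {}" using inter by simp
    then show ?thesis using False by auto
  qed
  have filt: "{i \<in> {..<n}. card (?K \<inter> sh_class q i) \<noteq> 0} = c ` {..<?s}"
  proof
    show "{i \<in> {..<n}. card (?K \<inter> sh_class q i) \<noteq> 0} \<subseteq> c ` {..<?s}"
      using cardi by (auto split: if_splits)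
  next
    show "c ` {..<?s} \<subseteq> {i \<in> {..<n}. card (?K \<inter> sh_class q i) \<noteq> 0}"
    proof
      fix i assume "i \<in> c ` {..<?s}"
      then obtain j where j: "j < ?s" "i = c j" by auto
      have sj: "(SOME j'. j' < ?s \<and> c j' = i) = j"
        using j cinj by (metis (mono_tags, lifting) inj_onD lessThan_iff someI_ex)
      show "i \<in> {i \<in> {..<n}. card (?K \<inter> sh_class q i) \<noteq> 0}"
        using cardi[of i] sj j posj cn by auto
    qed
  qed
  have eqf: "\<And>j. j < ?s \<Longrightarrow> card (?K \<inter> sh_class q (c j)) = \<sigma>!j"
  proof -
    fix j assume j: "j < ?s"
    have sj: "(SOME j'. j' < ?s \<and> c j' = c j) = j"
      using j cinj by (metis (mono_tags, lifting) inj_onD lessThan_iff someI_ex)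
    show "card (?K \<inter> sh_class q (c j)) = \<sigma>!j" using cardi[of "c j"] sj j by auto
  qed
  have "{# card (?K \<inter> sh_class q i). i \<in># {# i \<in># mset_set {..<n}. card (?K \<inter> sh_class q i) \<noteq> 0 #} #}
      = image_mset (\<lambda>i. card (?K \<inter> sh_class q i)) (mset_set (c ` {..<?s}))"
    using filt by simp
  also have "\<dots> = image_mset (\<lambda>i. card (?K \<inter> sh_class q i)) (image_mset c (mset_set {..<?s}))"
    using cinj by (simp add: image_mset_mset_set)
  also have "\<dots> = image_mset (\<lambda>j. \<sigma>!j) (mset_set {..<?s})"
    by (simp add: multiset.map_comp o_def) (rule image_mset_cong, simp add: eqf)
  also have "\<dots> = mset \<sigma>" by (simp add: mset_nth[symmetric])
  finally show ?thesis unfolding sh_edges_def using sub cardK by blast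
qed

lemma vert_finite: "finite (sh_vertices n q)" and vert_card: "card (sh_vertices n q) = n * q"
  unfolding sh_vertices_def by auto

lemma matching_card_le:
  assumes "is_matching n r q \<sigma> M"
  shows "finite M \<and> card M * r \<le> n * q"
proof -
  have E: "sh_edges n r q \<sigma> \<subseteq> Pow (sh_vertices n q)" unfolding sh_edges_def by auto
  have fM: "finite M" using assms E vert_finite unfolding is_matching_def
    by (meson finite_Pow_iff finite_subset)
  have sub: "\<Union>M \<subseteq> sh_vertices n q" using assms E unfolding is_matching_def by blast
  have fe: "\<forall>e\<in>M. finite e" using sub vert_finite by (meson Union_upper finite_subset subset_trans)
  have "card (\<Union>M) = (\<Sum>e\<in>M. card e)"
    using fM fe assms unfolding is_matching_def
    by (intro card_Union_disjoint) (auto simp: pairwise_def disjnt_def)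
  also have "\<dots> = (\<Sum>e\<in>M. r)"
    using assms unfolding is_matching_def sh_edges_def by (intro sum.cong) auto
  also have "\<dots> = card M * r" by simp
  finally have "card M * r = card (\<Union>M)" by simp
  also have "\<dots> \<le> n * q" using sub vert_finite vert_card card_mono by metis
  finally show ?thesis using fM by simp
qed

lemma matching_lemma:
  fixes \<Phi> :: "'d \<Rightarrow> nat \<times> nat \<Rightarrow> nat \<times> nat"
  assumes pos: "\<forall>x\<in>set \<sigma>. 0 < x"
    and r: "r = sum_list \<sigma>" "0 < r"
    and fD: "finite D"
    and inj: "inj_on (\<lambda>(d,p). \<Phi> d p) (D \<times> PP \<sigma>)"
    and sub: "\<And>d. d \<in> D \<Longrightarrow> \<Phi> d ` PP \<sigma> \<subseteq> sh_vertices n q"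
    and cls: "\<And>d j t. d \<in> D \<Longrightarrow> (j,t) \<in> PP \<sigma> \<Longrightarrow> fst (\<Phi> d (j,t)) = c d j"
    and cinj: "\<And>d. d \<in> D \<Longrightarrow> inj_on (c d) {..<length \<sigma>}"
    and cD: "card D * r = n * q"
  shows "(\<exists>M. is_perfect_matching n r q \<sigma> M) \<and> sh_nu n r q \<sigma> = card D"
proof -
  define M where "M = (\<lambda>d. \<Phi> d ` PP \<sigma>) ` D"
  have injd: "\<And>d. d \<in> D \<Longrightarrow> inj_on (\<Phi> d) (PP \<sigma>)"
  proof -
    fix d assume d: "d \<in> D"
    show "inj_on (\<Phi> d) (PP \<sigma>)"
    proof (rule inj_onI)
      fix x y assume "x \<in> PP \<sigma>" "y \<in> PP \<sigma>" "\<Phi> d x = \<Phi> d y"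
      then show "x = y" using inj d unfolding inj_on_def by fastforce
    qed
  qed
  have edges: "M \<subseteq> sh_edges n r q \<sigma>"
    unfolding M_def using edge_lemma[OF pos injd sub cls cinj] r by auto
  have disj: "\<And>d d' x. d \<in> D \<Longrightarrow> d' \<in> D \<Longrightarrow> x \<in> \<Phi> d ` PP \<sigma> \<Longrightarrow> x \<in> \<Phi> d' ` PP \<sigma> \<Longrightarrow> d = d'"
  proof -
    fix d d' x assume "d \<in> D" "d' \<in> D" "x \<in> \<Phi> d ` PP \<sigma>" "x \<in> \<Phi> d' ` PP \<sigma>"
    then obtain p p' where "p \<in> PP \<sigma>" "p' \<in> PP \<sigma>" "\<Phi> d p = \<Phi> d' p'" "d \<in> D" "d' \<in> D" by auto
    then show "d = d'" using inj unfolding inj_on_def by fastforce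
  qed
  have ism: "is_matching n r q \<sigma> M"
    unfolding is_matching_def using edges disj unfolding M_def by blast
  have ne: "PP \<sigma> \<noteq> {}" using PP_card[of \<sigma>] r by (metis card.empty less_irrefl)
  have injM: "inj_on (\<lambda>d. \<Phi> d ` PP \<sigma>) D"
  proof (rule inj_onI)
    fix d d' assume dd: "d \<in> D" "d' \<in> D" "\<Phi> d ` PP \<sigma> = \<Phi> d' ` PP \<sigma>"
    obtain p where "p \<in> PP \<sigma>" using ne by auto
    then show "d = d'" using disj[OF dd(1,2)] dd(3) by blast
  qed
  have cardM: "card M = card D" unfolding M_def using injM card_image by blast
  have UM: "\<Union>M = (\<lambda>(d,p). \<Phi> d p) ` (D \<times> PP \<sigma>)" unfolding M_def by auto
  have "card (\<Union>M) = card D * r" unfolding UM using card_image[OF inj] PP_card r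
    by (simp add: card_cartesian_product)
  moreover have "\<Union>M \<subseteq> sh_vertices n q" using sub unfolding M_def by auto
  ultimately have cov: "\<Union>M = sh_vertices n q"
    using cD vert_finite vert_card card_subset_eq by metis
  have pm: "is_perfect_matching n r q \<sigma> M" unfolding is_perfect_matching_def using ism cov by simp
  have "sh_nu n r q \<sigma> = card D"
    unfolding sh_nu_def
  proof (rule Max_eqI)
    have "{M. is_matching n r q \<sigma> M} \<subseteq> Pow (sh_edges n r q \<sigma>)" unfolding is_matching_def by auto
    moreover have "finite (sh_edges n r q \<sigma>)" unfolding sh_edges_def
      using vert_finite by (metis (no_types, lifting) Collect_mono Pow_def finite_Pow_iff rev_finite_subset)
    ultimately show "finite (card ` {M. is_matching n r q \<sigma> M})" by (meson finite_Pow_iff finite_imageI finite_subset)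
  next
    fix y assume "y \<in> card ` {M. is_matching n r q \<sigma> M}"
    then obtain M' where "is_matching n r q \<sigma> M'" "y = card M'" by auto
    then have "y * r \<le> card D * r" using matching_card_le cD by metis
    then show "y \<le> card D" using r by simp
  next
    show "card D \<in> card ` {M. is_matching n r q \<sigma> M}" using ism cardM by force
  qed
  then show ?thesis using pm by blast
qed

lemma L1: "y < (m::nat) \<Longrightarrow> y' < m \<Longrightarrow> x*m+y = x'*m+y' \<Longrightarrow> x = x' \<and> y = y'"
proof -
  assume a: "y < m" "y' < m" "x*m+y = x'*m+y'"
  have m: "0 < m" using a by simp
  have d1: "(x*m+y) div m = x" "(x*m+y) mod m = y" using a(1) m by simp_all
  have d2: "(x'*m+y') div m = x'" "(x'*m+y') mod m = y'" using a(2) m by simp_all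
  show ?thesis using d1 d2 a(3) by metis
qed

lemma L2: "((e::nat)+h) mod a = (e'+h) mod a \<Longrightarrow> e mod a = e' mod a"
  using cong_add_rcancel_nat[of e h e' a] unfolding cong_def by simp

lemma L3: "(x::nat) < a \<Longrightarrow> y < a \<Longrightarrow> (e+x) mod a = (e+y) mod a \<Longrightarrow> x = y"
  using cong_add_lcancel_nat[of e x y a] unfolding cong_def by simp

lemma L4: "(e::nat) mod a = e' mod a \<Longrightarrow> e div a = e' div a \<Longrightarrow> e = e'"
  by (metis div_mult_mod_eq)

lemma L5: "(x::nat) < a \<Longrightarrow> y < m \<Longrightarrow> x*m+y < a*m"
proof -
  assume "x < a" "y < m"
  then have "x*m + y < x*m + m" by simp
  also have "\<dots> = (x+1)*m" by simp
  also have "\<dots> \<le> a*m" using \<open>x<a\<close> by (intro mult_right_mono) auto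
  finally show ?thesis .
qed

lemma L6: "(off::nat) < r \<Longrightarrow> (G*r+off) div r = G \<and> (G*r+off) mod r = off"
  by simp

lemma PA_card:
  assumes "X \<subseteq> {..<length \<sigma>}"
  shows "card {p \<in> PP \<sigma>. fst p \<in> X} = (\<Sum>j\<in>X. \<sigma>!j)"
proof -
  have "{p \<in> PP \<sigma>. fst p \<in> X} = Sigma X (\<lambda>j. {..<\<sigma>!j})" using assms unfolding PP_def by auto
  moreover have "finite X" using assms finite_subset by blast
  ultimately show ?thesis by (simp add: card_SigmaI)
qed

lemma construction:
  assumes part: "is_partition \<sigma> r"
    and AB: "A \<inter> B = {}" "A \<union> B = {..<length \<sigma>}"
    and aB: "a = (\<Sum>j\<in>A. \<sigma> ! j)" "b = (\<Sum>j\<in>B. \<sigma> ! j)"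
    and pos: "0 < a" "0 < b" "0 < q"
    and dv: "a dvd q" "b dvd q" "r dvd n"
  shows "(\<exists>M. is_perfect_matching n r q \<sigma> M) \<and> sh_nu n r q \<sigma> = n * q div r"
proof -
  let ?s = "length \<sigma>"
  have posl: "\<forall>x\<in>set \<sigma>. 0 < x" and rs: "r = sum_list \<sigma>" using part unfolding is_partition_def by auto
  have fin: "finite A" "finite B" using AB by (metis finite_Un finite_lessThan)+
  have rab: "r = a + b"
    using rs aB AB fin by (simp add: sum_list_sum_nth atLeast0LessThan sum.union_disjoint[symmetric])
  have r0: "0 < r" using rab pos by simp
  define PA where "PA = {p \<in> PP \<sigma>. fst p \<in> A}"
  define PB where "PB = {p \<in> PP \<sigma>. fst p \<in> B}"
  have cPA: "card PA = a" unfolding PA_def aB using PA_card AB by blast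
  have cPB: "card PB = b" unfolding PB_def aB using PA_card AB by blast
  obtain hA where hA: "bij_betw hA PA {0..<a}"
    using ex_bij_betw_finite_nat[of PA] cPA PP_finite unfolding PA_def by force
  obtain hB where hB: "bij_betw hB PB {0..<b}"
    using ex_bij_betw_finite_nat[of PB] cPB PP_finite unfolding PB_def by force
  have hAl: "\<And>p. p \<in> PA \<Longrightarrow> hA p < a" using hA unfolding bij_betw_def by auto
  have hBl: "\<And>p. p \<in> PB \<Longrightarrow> hB p < b" using hB unfolding bij_betw_def by auto
  have hAi: "inj_on hA PA" and hBi: "inj_on hB PB" using hA hB unfolding bij_betw_def by auto
  have posj: "\<And>j. j < ?s \<Longrightarrow> 0 < \<sigma>!j" using posl by auto
  have j0A: "\<And>j. j \<in> A \<Longrightarrow> (j,0) \<in> PA" unfolding PA_def PP_def using AB posj by auto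
  have j0B: "\<And>j. j \<in> B \<Longrightarrow> (j,0) \<in> PB" unfolding PB_def PP_def using AB posj by auto
  define mA where "mA = q div a"
  define mB where "mB = q div b"
  have qA: "q = a * mA" "0 < mA" unfolding mA_def using dv pos by auto
  have qB: "q = b * mB" "0 < mB" unfolding mB_def using dv pos by auto
  define cc where "cc = (\<lambda>(G::nat,e::nat) j. if j \<in> A then G*r + (e + hA (j,0)) mod a
                                    else G*r + a + (e + hB (j,0)) mod b)"
  define \<Phi> where "\<Phi> = (\<lambda>(G::nat,e::nat) (j,t). if j \<in> A
       then (G*r + (e + hA (j,0)) mod a, hA (j,t) * mA + e div a)
       else (G*r + a + (e + hB (j,0)) mod b, hB (j,t) * mB + e div b))"
  define D where "D = {..<n div r} \<times> {..<q}"
  have PPsplit: "\<And>j t. (j,t) \<in> PP \<sigma> \<Longrightarrow> (j \<in> A \<and> (j,t) \<in> PA) \<or> (j \<notin> A \<and> j \<in> B \<and> (j,t) \<in> PB)"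
    unfolding PA_def PB_def PP_def using AB by auto
  have cls: "\<And>d j t. d \<in> D \<Longrightarrow> (j,t) \<in> PP \<sigma> \<Longrightarrow> fst (\<Phi> d (j,t)) = cc d j"
    unfolding \<Phi>_def cc_def by (auto split: prod.splits)
  have modA: "\<And>x. x mod a < a" using pos by simp
  have modB: "\<And>x. x mod b < b" using pos by simp
  have cinj: "\<And>d. d \<in> D \<Longrightarrow> inj_on (cc d) {..<?s}"
  proof -
    fix d assume "d \<in> D"
    obtain G e where d: "d = (G,e)" by fastforce
    show "inj_on (cc d) {..<?s}"
    proof (rule inj_onI)
      fix j j' assume j: "j \<in> {..<?s}" "j' \<in> {..<?s}" and eq: "cc d j = cc d j'"
      consider "j \<in> A" "j' \<in> A" | "j \<in> A" "j' \<notin> A" | "j \<notin> A" "j' \<in> A" | "j \<notin> A" "j' \<notin> A" by blast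
      then show "j = j'"
      proof cases
        case 1
        then have "(e + hA (j,0)) mod a = (e + hA (j',0)) mod a" using eq unfolding d cc_def by simp
        then have "hA (j,0) = hA (j',0)" using L3 hAl j0A 1 by blast
        then show ?thesis using hAi j0A 1 unfolding inj_on_def by blast
      next
        case 2
        then show ?thesis using eq modA[of "e + hA (j,0)"] unfolding d cc_def by simp
      next
        case 3
        then show ?thesis using eq modA[of "e + hA (j',0)"] unfolding d cc_def by simp
      next
        case 4
        then have jB: "j \<in> B" "j' \<in> B" using j AB by auto
        have "(e + hB (j,0)) mod b = (e + hB (j',0)) mod b" using eq 4 unfolding d cc_def by simp
        then have "hB (j,0) = hB (j',0)" using L3 hBl j0B jB by blast
        then show ?thesis using hBi j0B jB unfolding inj_on_def by blast
      qed
    qed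
  qed
  have sub: "\<And>d. d \<in> D \<Longrightarrow> \<Phi> d ` PP \<sigma> \<subseteq> sh_vertices n q"
  proof
    fix d x assume dD: "d \<in> D" and x: "x \<in> \<Phi> d ` PP \<sigma>"
    obtain G e where d: "d = (G,e)" and G: "G < n div r" and e: "e < q" using dD unfolding D_def by auto
    obtain j t where jt: "(j,t) \<in> PP \<sigma>" "x = \<Phi> d (j,t)" using x by auto
    have Gn: "\<And>off. off < r \<Longrightarrow> G*r + off < n"
    proof -
      fix off assume "off < r"
      then have "G*r + off < (n div r) * r" using L5[of G "n div r" off r] G by (simp add: mult.commute)
      then show "G*r + off < n" using dv by simp
    qed
    show "x \<in> sh_vertices n q"
    proof (cases "j \<in> A")
      case True
      then have pa: "(j,t) \<in> PA" using PPsplit jt by blast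
      have "e div a < mA" using e qA by (simp add: less_mult_imp_div_less mult.commute)
      then have k: "hA (j,t) * mA + e div a < q" using L5 hAl[OF pa] qA by simp
      have "(e + hA (j,0)) mod a < r" using modA rab by (metis add_lessD1 add.commute less_add_same_cancel1 pos(2) trans_less_add1)
      then show ?thesis using True jt k Gn unfolding d \<Phi>_def sh_vertices_def by simp
    next
      case False
      then have pb: "(j,t) \<in> PB" using PPsplit jt by blast
      have "e div b < mB" using e qB by (simp add: less_mult_imp_div_less mult.commute)
      then have k: "hB (j,t) * mB + e div b < q" using L5 hBl[OF pb] qB by simp
      have "a + (e + hB (j,0)) mod b < r" using modB rab by simp
      then show ?thesis using False jt k Gn[of "a + (e + hB (j,0)) mod b"] unfolding d \<Phi>_def sh_vertices_def
        by (simp add: add.assoc)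
    qed
  qed
  have inj: "inj_on (\<lambda>(d,p). \<Phi> d p) (D \<times> PP \<sigma>)"
  proof (rule inj_onI)
    fix x y assume x: "x \<in> D \<times> PP \<sigma>" and y: "y \<in> D \<times> PP \<sigma>"
      and eqxy: "(\<lambda>(d,p). \<Phi> d p) x = (\<lambda>(d,p). \<Phi> d p) y"
    obtain G e j t where xx: "x = ((G,e),(j,t))" by (metis prod.collapse)
    obtain G' e' j' t' where yy: "y = ((G',e'),(j',t'))" by (metis prod.collapse)
    have d1: "((G,e),(j,t)) \<in> D \<times> PP \<sigma>" and d2: "((G',e'),(j',t')) \<in> D \<times> PP \<sigma>"
      using x y xx yy by auto
    have eq: "\<Phi> (G,e) (j,t) = \<Phi> (G',e') (j',t')" using eqxy xx yy by simp
    have e: "e < q" "e' < q" using d1 d2 unfolding D_def by auto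
    define off where "off = (if j \<in> A then (e + hA (j,0)) mod a else a + (e + hB (j,0)) mod b)"
    define off' where "off' = (if j' \<in> A then (e' + hA (j',0)) mod a else a + (e' + hB (j',0)) mod b)"
    have modA': "\<And>x. x mod a < r" using modA rab by (metis trans_less_add1)
    have offr: "off < r" "off' < r" unfolding off_def off'_def using modA' modB rab by auto
    have "G*r + off = G'*r + off'" using eq unfolding \<Phi>_def off_def off'_def by (auto split: if_splits simp: add.assoc)
    then have GG: "G = G'" and oo: "off = off'" using L1[OF offr, of G G'] by (auto simp: mult.commute)
    have eA: "e div a < mA" "e' div a < mA" using e qA by (simp_all add: less_mult_imp_div_less mult.commute)
    have eB: "e div b < mB" "e' div b < mB" using e qB by (simp_all add: less_mult_imp_div_less mult.commute)
    have "G = G' \<and> e = e' \<and> j = j' \<and> t = t'"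
    proof (cases "j \<in> A")
      case True
      then have j'A: "j' \<in> A" using oo modA[of "e + hA (j,0)"] unfolding off_def off'_def
        by (cases "j' \<in> A") auto
      have pa: "(j,t) \<in> PA" "(j',t') \<in> PA" using PPsplit d1 d2 True j'A by auto
      have k: "hA (j,t) * mA + e div a = hA (j',t') * mA + e' div a"
        using eq True j'A unfolding \<Phi>_def by simp
      then have h: "hA (j,t) = hA (j',t')" and dd: "e div a = e' div a" using L1[OF eA] by blast+
      have jt: "(j,t) = (j',t')" using h hAi pa unfolding inj_on_def by blast
      have "(e + hA (j,0)) mod a = (e' + hA (j,0)) mod a" using oo True j'A jt unfolding off_def off'_def by simp
      then have "e mod a = e' mod a" by (rule L2)
      then show ?thesis using dd L4 GG jt by blast
    next
      case False
      then have j'A: "j' \<notin> A" using oo modA[of "e' + hA (j',0)"] unfolding off_def off'_def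
        by (cases "j' \<in> A") auto
      have pb: "(j,t) \<in> PB" "(j',t') \<in> PB" using PPsplit d1 d2 False j'A by auto
      have k: "hB (j,t) * mB + e div b = hB (j',t') * mB + e' div b"
        using eq False j'A unfolding \<Phi>_def by simp
      then have h: "hB (j,t) = hB (j',t')" and dd: "e div b = e' div b" using L1[OF eB] by blast+
      have jt: "(j,t) = (j',t')" using h hBi pb unfolding inj_on_def by blast
      have "(e + hB (j,0)) mod b = (e' + hB (j,0)) mod b" using oo False j'A jt unfolding off_def off'_def by simp
      then have "e mod b = e' mod b" by (rule L2)
      then show ?thesis using dd L4 GG jt by blast
    qed
    then show "x = y" using xx yy by simp
  qed
  have cD: "card D * r = n * q" unfolding D_def using dv by (simp add: card_cartesian_product)
  have "(\<exists>M. is_perfect_matching n r q \<sigma> M) \<and> sh_nu n r q \<sigma> = card D"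
    by (rule matching_lemma[OF posl rs r0 _ inj sub cls cinj cD]) (simp add: D_def)
  moreover have "card D = n * q div r" using cD r0 by (metis nonzero_mult_div_cancel_right less_not_refl2)
  ultimately show ?thesis by simp
qed

theorem lemma3p9:
  fixes n r q :: nat and \<sigma> :: "nat list" and A B :: "nat set"
  assumes "is_partition \<sigma> r"
    and "r_good \<sigma> r"
    and "A \<inter> B = {}" and "A \<union> B = {..<length \<sigma>}"
    and "gcd (\<Sum>j\<in>A. \<sigma> ! j) (\<Sum>j\<in>B. \<sigma> ! j) = 1"
    and "gcd (\<Sum>j\<in>A. \<sigma> ! j) r = 1"
    and "gcd (\<Sum>j\<in>B. \<sigma> ! j) r = 1"
    and "r dvd n"
    and "lcm (\<Sum>j\<in>A. \<sigma> ! j) (\<Sum>j\<in>B. \<sigma> ! j) dvd q"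
  shows "(\<exists>M. is_perfect_matching n r q \<sigma> M) \<and> sh_nu n r q \<sigma> = n * q div r"
proof (cases "q = 0")
  case True
  have posl: "\<forall>x\<in>set \<sigma>. 0 < x" and rs: "r = sum_list \<sigma>" using assms(1) unfolding is_partition_def by auto
  have r0: "0 < r"
  proof (rule ccontr)
    assume "\<not> 0 < r"
    then have "r = 0" by simp
    have "set \<sigma> = {}"
    proof (rule ccontr)
      assume "set \<sigma> \<noteq> {}"
      then obtain x where x: "x \<in> set \<sigma>" by (cases \<sigma>) auto
      then have "x \<le> sum_list \<sigma>" by (simp add: member_le_sum_list)
      then show False using x posl rs \<open>r = 0\<close> by auto
    qed
    then have "\<sigma> = []" by simp
    then show False using assms(2) \<open>r = 0\<close> unfolding r_good_def by simp
  qed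
  have "(\<exists>M. is_perfect_matching n r q \<sigma> M) \<and> sh_nu n r q \<sigma> = card ({}::nat set)"
    by (rule matching_lemma[where \<Phi> = "\<lambda>_ _. (0,0)" and c = "\<lambda>_ _. 0", OF posl rs r0]) (auto simp: True)
  then show ?thesis using True by simp
next
  case False
  let ?a = "\<Sum>j\<in>A. \<sigma> ! j" and ?b = "\<Sum>j\<in>B. \<sigma> ! j"
  have a0: "0 < ?a"
  proof (rule ccontr)
    assume "\<not> 0 < ?a" then have l0: "lcm ?a ?b = 0" by simp
    have "0 dvd q" using assms(9) unfolding l0 .
    then show False using False by simp
  qed
  have b0: "0 < ?b"
  proof (rule ccontr)
    assume "\<not> 0 < ?b" then have l0: "lcm ?a ?b = 0" by simp
    have "0 dvd q" using assms(9) unfolding l0 .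
    then show False using False by simp
  qed
  have "?a dvd q" "?b dvd q" using assms(9) dvd_trans dvd_lcm1 dvd_lcm2 by blast+
  then show ?thesis
    using construction[OF assms(1,3,4) refl refl a0 b0 _ _ _ assms(8)] False by simp
qed

end
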